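(* Consider the stochastic MPC scheme described in the context, with i.i.d. zero-mean disturbances $w(k)$, $\mathbb{E}(w(k))=0$, $\mathrm{var}(w(k))=\Sigma^w$ for all $0\le k\le\bar N$, quadratic costs $l_k(x,u)=\|x\|_Q^2+\|u\|_R^2$ for all $k$ and $l_f(x)=\|x\|_P^2$ with $Q\succeq0$, $R\succ0$, and $P$ the solution of the Lyapunov equation $(A+BK)^\top P(A+BK)-P=-(Q+K^\top RK)$. Let $J^*(x,z)$ denote the optimal cost of problem $(\mathcal{P}_k)$ with initial measured state $x_0=x$ and nominal initial state $z_0=z$. Then, under the control law $u(k)=Ke_0(k)+v_0^*(k)$, $$\mathbb{E}\big(J^*(x(k+1),z(k+1))-J^*(x(k),z(k))\,\big|\,x(k),z(k)\big)\le-\|x(k)\|_Q^2-\|u(k)\|_R^2+\mathrm{tr}(P\Sigma^w).$$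
   Context: $\|x\|_P=\sqrt{x^\top Px}$. System: $x(k+1)=Ax(k)+Bu(k)+w(k)$, $x\in\mathbb{R}^{n_x}$, $u\in\mathbb{R}^{n_u}$, finite horizon $\bar N$. $\mathcal{X},\mathcal{U}$ convex sets; $\mathcal{A}\ominus\mathcal{B}=\{a\in\mathcal{A}: a+b\in\mathcal{A}\ \forall b\in\mathcal{B}\}$. A fixed stabilizing gain $K\in\mathbb{R}^{n_u\times n_x}$ is given; $\mathcal{R}^x_k,\mathcal{R}^u_k$ ($0\le k\le\bar N$) are given tightening sets; $\mathcal{R}_f$ is a set with $\mathcal{R}_f\supseteq\bigcup_k\mathcal{R}^x_k$, $K\mathcal{R}_f\supseteq\bigcup_k\mathcal{R}^u_k$, and the terminal set $\mathcal{Z}_f$ satisfies $\mathcal{Z}_f\subseteq\mathcal{X}\ominus\mathcal{R}_f$, $(A+BK)\mathcal{Z}_f\subseteq\mathcal{Z}_f$, $K\mathcal{Z}_f\subseteq\mathcal{U}\ominus K\mathcal{R}_f$. Problem $(\mathcal{P}_k)$ at time $k$: minimize over $v_0,\dots,v_{N-1}$ the cost $\mathbb{E}_{W_k}\big(l_f(x_N)+\sum_{i=0}^{N-1}l_{k+i}(x_i,u_i)\big)$ subject to $x_i=z_i+e_i$, $u_i=Ke_i+v_i$, $z_{i+1}=Az_i+Bv_i$, $e_{i+1}=(A+BK)e_i+w_i$, where $W_k=[w_0^\top,\dots,w_N^\top]^\top$ has the conditional distribution of $[w(k)^\top,\dots,w(k+N)^\top]^\top$ given the realized $w(0),\dots,w(k-1)$;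 constraints $z_i\in\mathcal{X}\ominus\mathcal{R}^x_{i+k}$, $v_i\in\mathcal{U}\ominus\mathcal{R}^u_{i+k}$ ($i=0,\dots,N-1$), $z_N\in\mathcal{Z}_f$; initialization $x_0=x(k)$, $z_0=z_1(k-1)$ (with $z_0(0)=x(0)$), $e_0=x_0-z_0$. Closed-loop nominal state $z(k)=z_0(k)$; applied input $u(k)=Ke_0(k)+v_0^*(k)$ with $v^*(k)$ optimal for $(\mathcal{P}_k)$. *)

theory Defs
  imports "HOL-Probability.Probability"
begin

text \<open>Squared weighted norm: qf M x = x' M x = (norm x wrt M)^2.\<close>
definition qf :: "real^'k^'k \<Rightarrow> real^'k \<Rightarrow> real" where
  "qf M x = x \<bullet> (M *v x)"

text \<open>Pontryagin difference, as in the paper.\<close>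
definition pdiff :: "('a::plus) set \<Rightarrow> 'a set \<Rightarrow> 'a set" where
  "pdiff S T = {a \<in> S. \<forall>b\<in>T. a + b \<in> S}"

text \<open>Nominal prediction z_{i+1} = A z_i + B v_i.\<close>
fun zpred :: "real^'n^'n \<Rightarrow> real^'m^'n \<Rightarrow> real^'n \<Rightarrow> (nat \<Rightarrow> real^'m) \<Rightarrow> nat \<Rightarrow> real^'n" where
  "zpred A B z0 v 0 = z0"
| "zpred A B z0 v (Suc i) = A *v zpred A B z0 v i + B *v v i"

text \<open>Error prediction e_{i+1} = (A+BK) e_i + w_i.\<close>
fun epred :: "real^'n^'n \<Rightarrow> real^'m^'n \<Rightarrow> real^'n^'m \<Rightarrow> real^'n \<Rightarrow> (nat \<Rightarrow> real^'n) \<Rightarrow> nat \<Rightarrow> real^'n" where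
  "epred A B K e0 w 0 = e0"
| "epred A B K e0 w (Suc i) = (A + B ** K) *v epred A B K e0 w i + w i"

text \<open>Realised cost for a disturbance realisation w = (w_0,...,w_N), with
  x_0 = x, z_0 = z, e_0 = x - z, x_i = z_i + e_i, u_i = K e_i + v_i.\<close>
definition sample_cost ::
  "real^'n^'n \<Rightarrow> real^'m^'n \<Rightarrow> real^'n^'m \<Rightarrow> real^'n^'n \<Rightarrow> real^'m^'m \<Rightarrow> real^'n^'n
   \<Rightarrow> nat \<Rightarrow> real^'n \<Rightarrow> real^'n \<Rightarrow> (nat \<Rightarrow> real^'m) \<Rightarrow> (nat \<Rightarrow> real^'n) \<Rightarrow> real" where
  "sample_cost A B K Q R P N x z v w =
     (let zs = zpred A B z v; es = epred A B K (x - z) w in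
      qf P (zs N + es N) + (\<Sum>i<N. qf Q (zs i + es i) + qf R (K *v es i + v i)))"

text \<open>Expected cost of problem (P_k): expectation over W = (w_0,...,w_N), i.i.d. with law D.\<close>
definition exp_cost ::
  "real^'n^'n \<Rightarrow> real^'m^'n \<Rightarrow> real^'n^'m \<Rightarrow> real^'n^'n \<Rightarrow> real^'m^'m \<Rightarrow> real^'n^'n
   \<Rightarrow> (real^'n) measure \<Rightarrow> nat \<Rightarrow> real^'n \<Rightarrow> real^'n \<Rightarrow> (nat \<Rightarrow> real^'m) \<Rightarrow> real" where
  "exp_cost A B K Q R P D N x z v =
     (\<integral>w. sample_cost A B K Q R P N x z v w \<partial>(PiM {..N} (\<lambda>_. D)))"

text \<open>Feasible decision sequences v_0..v_{N-1} of (P_k) with nominal initial state z.\<close>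
definition feasible ::
  "real^'n^'n \<Rightarrow> real^'m^'n \<Rightarrow> (real^'n) set \<Rightarrow> (real^'m) set \<Rightarrow> (nat \<Rightarrow> (real^'n) set)
   \<Rightarrow> (nat \<Rightarrow> (real^'m) set) \<Rightarrow> (real^'n) set \<Rightarrow> nat \<Rightarrow> nat \<Rightarrow> real^'n \<Rightarrow> (nat \<Rightarrow> real^'m) set" where
  "feasible A B X U Rx Ru Zf N k z =
     {v. (\<forall>i<N. zpred A B z v i \<in> pdiff X (Rx (i + k)) \<and> v i \<in> pdiff U (Ru (i + k)))
         \<and> zpred A B z v N \<in> Zf}"

text \<open>Optimal value J^*(x,z) of (P_k).\<close>
definition Jstar ::
  "real^'n^'n \<Rightarrow> real^'m^'n \<Rightarrow> real^'n^'m \<Rightarrow> real^'n^'n \<Rightarrow> real^'m^'m \<Rightarrow> real^'n^'n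
   \<Rightarrow> (real^'n) measure \<Rightarrow> (real^'n) set \<Rightarrow> (real^'m) set \<Rightarrow> (nat \<Rightarrow> (real^'n) set)
   \<Rightarrow> (nat \<Rightarrow> (real^'m) set) \<Rightarrow> (real^'n) set \<Rightarrow> nat \<Rightarrow> nat \<Rightarrow> real^'n \<Rightarrow> real^'n \<Rightarrow> real" where
  "Jstar A B K Q R P D X U Rx Ru Zf N k x z =
     Inf (exp_cost A B K Q R P D N x z ` feasible A B X U Rx Ru Zf N k z)"

end

theory Submission
  imports Defs
begin

lemma qf_add: "qf M (a + b) = qf M a + qf M b + (a \<bullet> (M *v b) + b \<bullet> (M *v a))"
  unfolding qf_def by (simp add: matrix_vector_right_distrib inner_add_left inner_add_right)

lemma qf_zero[simp]: "qf M 0 = 0"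
  unfolding qf_def by simp

lemma epred_add: "epred A B K (a + b) (\<lambda>i. w1 i + w2 i) i = epred A B K a w1 i + epred A B K b w2 i"
  by (induction i) (simp_all add: matrix_vector_right_distrib algebra_simps)

lemma zpred_zero[simp]: "zpred A B 0 (\<lambda>_. 0) i = 0"
  by (induction i) simp_all

lemma epred_zero[simp]: "epred A B K 0 (\<lambda>_. 0) i = 0"
  by (induction i) simp_all

lemma epred_shift: "epred A B K e (\<lambda>_. 0) (Suc i) = epred A B K ((A + B ** K) *v e) (\<lambda>_. 0) i"
  by (induction i) simp_all

lemma inner_transpose: "(y::real^'n) \<bullet> (transpose M *v v) = (M *v y) \<bullet> v"
  by (metis dot_lmul_matrix inner_commute transpose_matrix_vector)

lemma mv_neg: "(- M) *v (y::real^'n) = - (M *v y)"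
  by (metis add_eq_0_iff matrix_vector_mult_add_rdistrib matrix_vector_mult_0 neg_eq_iff_add_eq_0)

lemma inner_vmul: "(y::real^'n) \<bullet> (v v* M) = v \<bullet> (M *v y)"
  by (metis dot_lmul_matrix inner_commute)

lemma lyap_qf_gen:
  assumes lyap: "transpose AK ** P ** AK - P = - (Q + transpose K ** R ** K)"
  shows "qf P (AK *v y) = qf P y - qf Q y - qf R (K *v y)"
proof -
  have "y \<bullet> ((transpose AK ** P ** AK - P) *v y) = y \<bullet> ((- (Q + transpose K ** R ** K)) *v y)"
    using lyap by simp
  then show ?thesis
    unfolding qf_def
    by (simp add: matrix_vector_mult_diff_rdistrib matrix_vector_mult_add_rdistrib inner_diff_right inner_add_right
        matrix_vector_mul_assoc[symmetric] inner_vmul mv_neg inner_commute)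
qed

lemma telescope:
  assumes lyap: "transpose (A + B ** K) ** P ** (A + B ** K) - P = - (Q + transpose K ** R ** K)"
  shows "sample_cost A B K Q R P N y 0 (\<lambda>_. 0) (\<lambda>_. 0) = qf P y"
proof -
  have "qf P (epred A B K y (\<lambda>_. 0) N) + (\<Sum>i<N. qf Q (epred A B K y (\<lambda>_. 0) i) + qf R (K *v epred A B K y (\<lambda>_. 0) i)) = qf P y"
  proof (induction N)
    case 0 then show ?case by simp
  next
    case (Suc N)
    show ?case using Suc lyap_qf_gen[OF lyap, of "epred A B K y (\<lambda>_. 0) N"] by simp
  qed
  then show ?thesis unfolding sample_cost_def Let_def by simp
qed

lemma zpred_shift:
  assumes "i \<le> M" and "\<And>j. j < M \<Longrightarrow> v' j = vs (Suc j)"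
  shows "zpred A B (A *v z + B *v vs 0) v' i = zpred A B z vs (Suc i)"
  using assms(1)
proof (induction i)
  case 0 then show ?case by simp
next
  case (Suc i) then show ?case using assms(2)[of i] by simp
qed

lemma shift_cost:
  assumes lyap: "transpose (A + B ** K) ** P ** (A + B ** K) - P = - (Q + transpose K ** R ** K)"
    and N: "N = Suc M"
    and v': "v' = (\<lambda>i. if i < M then vs (Suc i) else K *v zpred A B z vs N)"
  shows "sample_cost A B K Q R P N (A *v x + B *v (K *v (x - z) + vs 0)) (A *v z + B *v vs 0) v' (\<lambda>_. 0)
       = sample_cost A B K Q R P N x z vs (\<lambda>_. 0) - qf Q x - qf R (K *v (x - z) + vs 0)"
proof -
  define AK where "AK = A + B ** K"
  define zz where "zz = zpred A B z vs"
  define dd where "dd = epred A B K (x - z) (\<lambda>_. 0)"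
  define z1 where "z1 = A *v z + B *v vs 0"
  define x1 where "x1 = A *v x + B *v (K *v (x - z) + vs 0)"
  have e1: "x1 - z1 = AK *v (x - z)"
    unfolding x1_def z1_def AK_def by (simp add: algebra_simps matrix_vector_mul_assoc)
  have dd': "epred A B K (x1 - z1) (\<lambda>_. 0) i = dd (Suc i)" for i
    unfolding e1 dd_def AK_def by (simp only: epred_shift)
  have zz': "zpred A B z1 v' i = zz (Suc i)" if "i \<le> M" for i
    unfolding z1_def zz_def by (rule zpred_shift[OF that]) (simp add: v')
  have zzN: "zpred A B z1 v' N = AK *v zz N"
  proof -
    have "zpred A B z1 v' N = A *v zpred A B z1 v' M + B *v v' M" by (simp add: N)
    also have "\<dots> = A *v zz N + B *v (K *v zz N)" using zz'[of M] by (simp add: v' N zz_def)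
    also have "\<dots> = AK *v zz N" by (simp add: AK_def matrix_vector_mult_add_rdistrib matrix_vector_mul_assoc)
    finally show ?thesis .
  qed
  have ddN: "dd (Suc N) = AK *v dd N" unfolding dd_def AK_def by simp
  define f where "f = (\<lambda>i. qf Q (zz i + dd i) + qf R (K *v dd i + vs i))"
  have lhs: "sample_cost A B K Q R P N x1 z1 v' (\<lambda>_. 0) =
      qf P (AK *v (zz N + dd N)) + (\<Sum>i<M. f (Suc i)) + (qf Q (zz N + dd N) + qf R (K *v (zz N + dd N)))"
  proof -
    have "(\<Sum>i<N. qf Q (zpred A B z1 v' i + epred A B K (x1 - z1) (\<lambda>_. 0) i) +
                 qf R (K *v epred A B K (x1 - z1) (\<lambda>_. 0) i + v' i))
        = (\<Sum>i<M. f (Suc i)) + (qf Q (zz N + dd N) + qf R (K *v (zz N + dd N)))"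
    proof -
      let ?g = "\<lambda>i. qf Q (zpred A B z1 v' i + epred A B K (x1 - z1) (\<lambda>_. 0) i) +
                 qf R (K *v epred A B K (x1 - z1) (\<lambda>_. 0) i + v' i)"
      have "(\<Sum>i<N. ?g i) = (\<Sum>i<M. ?g i) + ?g M" by (simp add: N)
      moreover have "(\<Sum>i<M. ?g i) = (\<Sum>i<M. f (Suc i))"
      proof (rule sum.cong)
        fix i assume "i \<in> {..<M}"
        then have "i < M" by simp
        then show "?g i = f (Suc i)" using zz'[of i] dd'[of i] by (simp add: f_def v')
      qed simp
      moreover have "?g M = qf Q (zz N + dd N) + qf R (K *v (zz N + dd N))"
        using zz'[of M] dd'[of M] by (simp add: v' N[symmetric] matrix_vector_right_distrib add.commute zz_def)
      ultimately show ?thesis by simp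
    qed
    moreover have "zpred A B z1 v' N + epred A B K (x1 - z1) (\<lambda>_. 0) N = AK *v (zz N + dd N)"
      using zzN dd' ddN by (simp add: matrix_vector_right_distrib)
    ultimately show ?thesis unfolding sample_cost_def Let_def by simp
  qed
  have rhs: "sample_cost A B K Q R P N x z vs (\<lambda>_. 0) = qf P (zz N + dd N) + (f 0 + (\<Sum>i<M. f (Suc i)))"
    unfolding sample_cost_def Let_def zz_def[symmetric] dd_def[symmetric] f_def[symmetric]
    unfolding N by (simp only: sum.lessThan_Suc_shift)
  have f0: "f 0 = qf Q x + qf R (K *v (x - z) + vs 0)"
    unfolding f_def zz_def dd_def by simp
  show ?thesis
    using lhs rhs f0 lyap_qf_gen[OF lyap, of "zz N + dd N"]
    unfolding x1_def[symmetric] z1_def[symmetric] AK_def[symmetric] by simp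
qed

lemma mv_borel[measurable]: "(\<lambda>y::real^'n. (M::real^'n^'m) *v y) \<in> borel_measurable borel"
  by (intro borel_measurable_continuous_onI linear_continuous_on matrix_vector_mul_bounded_linear)

lemma mv_meas[measurable (raw)]: "f \<in> borel_measurable X \<Longrightarrow> (\<lambda>x. (M::real^'n^'m) *v (f x :: real^'n)) \<in> borel_measurable X"
  using measurable_compose[OF _ mv_borel] by blast

definition good :: "'a measure \<Rightarrow> ('a \<Rightarrow> real^'n) \<Rightarrow> bool" where
  "good \<mu> Y \<longleftrightarrow> Y \<in> borel_measurable \<mu> \<and> integrable \<mu> Y \<and> integrable \<mu> (\<lambda>\<omega>. (norm (Y \<omega>))\<^sup>2)"

lemma mv_bound: "\<exists>c. c > 0 \<and> (\<forall>y. norm ((M::real^'n^'m) *v y) \<le> norm y * c)"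
  using bounded_linear.pos_bounded[OF matrix_vector_mul_bounded_linear[of M]] by blast

lemma good_zero: "good \<mu> (\<lambda>_. 0)"
  unfolding good_def by simp

lemma good_lin:
  assumes Y: "good \<mu> Y" and Z: "good \<mu> Z"
  shows "good \<mu> (\<lambda>\<omega>. (M::real^'n^'m) *v Y \<omega> + Z \<omega>)"
    and "integral\<^sup>L \<mu> (\<lambda>\<omega>. M *v Y \<omega> + Z \<omega>) = M *v integral\<^sup>L \<mu> Y + integral\<^sup>L \<mu> Z"
proof -
  have [measurable]: "Y \<in> borel_measurable \<mu>" "Z \<in> borel_measurable \<mu>" using Y Z by (auto simp: good_def)
  have iY: "integrable \<mu> Y" and iZ: "integrable \<mu> Z" using Y Z by (auto simp: good_def)
  have iMY: "integrable \<mu> (\<lambda>\<omega>. M *v Y \<omega>)"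
    by (rule Bochner_Integration.integrable_bounded_linear[OF matrix_vector_mul_bounded_linear iY])
  show "integral\<^sup>L \<mu> (\<lambda>\<omega>. M *v Y \<omega> + Z \<omega>) = M *v integral\<^sup>L \<mu> Y + integral\<^sup>L \<mu> Z"
    using iMY iZ integral_bounded_linear[OF matrix_vector_mul_bounded_linear iY, of M] by simp
  obtain c where c: "c > 0" "\<And>y. norm (M *v y) \<le> norm y * c" using mv_bound[of M] by blast
  have sq: "(norm (M *v y + z))\<^sup>2 \<le> 2 * c\<^sup>2 * (norm y)\<^sup>2 + 2 * (norm z)\<^sup>2" for y z
  proof -
    have "norm (M *v y + z) \<le> norm y * c + norm z" using c(2)[of y] norm_triangle_ineq[of "M *v y" z] by linarith
    then have "(norm (M *v y + z))\<^sup>2 \<le> (norm y * c + norm z)\<^sup>2" by (simp add: power_mono)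
    also have "\<dots> \<le> 2 * c\<^sup>2 * (norm y)\<^sup>2 + 2 * (norm z)\<^sup>2"
    proof -
      have "0 \<le> (norm y * c - norm z)\<^sup>2" by simp
      then show ?thesis by (simp add: power2_eq_square algebra_simps)
    qed
    finally show ?thesis .
  qed
  have "integrable \<mu> (\<lambda>\<omega>. 2 * c\<^sup>2 * (norm (Y \<omega>))\<^sup>2 + 2 * (norm (Z \<omega>))\<^sup>2)"
    using Y Z unfolding good_def by auto
  then have "integrable \<mu> (\<lambda>\<omega>. (norm (M *v Y \<omega> + Z \<omega>))\<^sup>2)"
    by (rule Bochner_Integration.integrable_bound) (auto intro!: AE_I2 order_trans[OF _ sq] simp: abs_of_nonneg)
  then show "good \<mu> (\<lambda>\<omega>. (M::real^'n^'m) *v Y \<omega> + Z \<omega>)"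
    unfolding good_def using iMY iZ by auto
qed

lemma good_qf:
  assumes Y: "good \<mu> Y"
  shows "integrable \<mu> (\<lambda>\<omega>. qf M (Y \<omega>))"
proof -
  have [measurable]: "Y \<in> borel_measurable \<mu>" using Y by (auto simp: good_def)
  obtain c where c: "c > 0" "\<And>y. norm (M *v y) \<le> norm y * c" using mv_bound[of M] by blast
  have b: "norm (qf M y) \<le> c * (norm y)\<^sup>2" for y
  proof -
    have "norm (qf M y) \<le> norm y * norm (M *v y)" unfolding qf_def real_norm_def
      by (rule Cauchy_Schwarz_ineq2)
    also have "\<dots> \<le> norm y * (norm y * c)" by (rule mult_left_mono[OF c(2)]) simp
    finally show ?thesis by (simp add: power2_eq_square mult_ac)
  qed
  have "integrable \<mu> (\<lambda>\<omega>. c * (norm (Y \<omega>))\<^sup>2)" using Y unfolding good_def by auto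
  then show ?thesis
  proof (rule Bochner_Integration.integrable_bound)
    show "(\<lambda>\<omega>. qf M (Y \<omega>)) \<in> borel_measurable \<mu>" unfolding qf_def by measurable
    show "AE \<omega> in \<mu>. norm (qf M (Y \<omega>)) \<le> norm (c * (norm (Y \<omega>))\<^sup>2)"
      using b c by (auto intro!: AE_I2 order_trans[OF b])
  qed
qed

lemma good_mv: "good \<mu> Y \<Longrightarrow> good \<mu> (\<lambda>\<omega>. (M::real^'n^'m) *v Y \<omega>)"
  using good_lin(1)[OF _ good_zero, of \<mu> Y M] by simp

definition bilin :: "real^'k^'k \<Rightarrow> real^'k \<Rightarrow> real^'k \<Rightarrow> real" where
  "bilin M a b = a \<bullet> (M *v b) + b \<bullet> (M *v a)"

definition cross where
  "cross A B K Q R P N x z v n = (let zs = zpred A B z v; ds = epred A B K (x - z) (\<lambda>_. 0) in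
     bilin P (zs N + ds N) (n N) + (\<Sum>i<N. bilin Q (zs i + ds i) (n i) + bilin R (K *v ds i + v i) (K *v n i)))"

lemma qf_add': "qf M (a + b) = qf M a + qf M b + bilin M a b"
  by (simp add: qf_add bilin_def)

lemma expand:
  "sample_cost A B K Q R P N (x + y) z v w = sample_cost A B K Q R P N x z v (\<lambda>_. 0)
     + sample_cost A B K Q R P N y 0 (\<lambda>_. 0) w + cross A B K Q R P N x z v (epred A B K y w)"
proof -
  have e: "epred A B K (x + y - z) w i = epred A B K (x - z) (\<lambda>_. 0) i + epred A B K y w i" for i
    using epred_add[of A B K "x - z" y "\<lambda>_. 0" w i] by (simp add: algebra_simps)
  define zs where "zs = zpred A B z v"
  define ds where "ds = epred A B K (x - z) (\<lambda>_. 0)"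
  define n where "n = epred A B K y w"
  have e': "epred A B K (x + y - z) w i = ds i + n i" for i unfolding ds_def n_def by (rule e)
  have t1: "qf P (zs N + (ds N + n N)) = qf P (zs N + ds N) + qf P (n N) + bilin P (zs N + ds N) (n N)"
    by (simp only: add.assoc[symmetric] qf_add')
  have t2: "qf Q (zs i + (ds i + n i)) + qf R (K *v (ds i + n i) + v i)
     = (qf Q (zs i + ds i) + qf R (K *v ds i + v i)) + (qf Q (n i) + qf R (K *v n i))
       + (bilin Q (zs i + ds i) (n i) + bilin R (K *v ds i + v i) (K *v n i))" for i
  proof -
    have "K *v (ds i + n i) + v i = (K *v ds i + v i) + K *v n i" by (simp add: matrix_vector_right_distrib)
    then show ?thesis by (simp only: add.assoc[symmetric] qf_add')
  qed
  have "sample_cost A B K Q R P N (x + y) z v w = qf P (zs N + (ds N + n N)) +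
      (\<Sum>i<N. qf Q (zs i + (ds i + n i)) + qf R (K *v (ds i + n i) + v i))"
    unfolding sample_cost_def Let_def zs_def[symmetric] e' ..
  also have "\<dots> = (qf P (zs N + ds N) + (\<Sum>i<N. qf Q (zs i + ds i) + qf R (K *v ds i + v i)))
     + (qf P (n N) + (\<Sum>i<N. qf Q (n i) + qf R (K *v n i)))
     + (bilin P (zs N + ds N) (n N) + (\<Sum>i<N. bilin Q (zs i + ds i) (n i) + bilin R (K *v ds i + v i) (K *v n i)))"
    unfolding t1 t2 sum.distrib by simp
  also have "\<dots> = sample_cost A B K Q R P N x z v (\<lambda>_. 0)
     + sample_cost A B K Q R P N y 0 (\<lambda>_. 0) w + cross A B K Q R P N x z v (epred A B K y w)"
    unfolding sample_cost_def cross_def Let_def zs_def[symmetric] ds_def[symmetric] n_def[symmetric] by (simp add: n_def)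
  finally show ?thesis .
qed

lemma bilin_lin: "bilin M a b = (a v* M + M *v a) \<bullet> b"
  unfolding bilin_def inner_add_left dot_lmul_matrix by (simp add: inner_commute[of b])

lemma bilin_lin2: "bilin M a (L *v b) = ((a v* M + M *v a) v* L) \<bullet> b"
  by (simp add: bilin_lin dot_lmul_matrix)

lemma inner_int0:
  assumes "integrable \<mu> Y" "integral\<^sup>L \<mu> Y = (0::real^'n)"
  shows "integrable \<mu> (\<lambda>\<omega>. c \<bullet> Y \<omega>)" "integral\<^sup>L \<mu> (\<lambda>\<omega>. c \<bullet> Y \<omega>) = 0"
  using integrable_bounded_linear[OF bounded_linear_inner_right assms(1)]
    integral_bounded_linear[OF bounded_linear_inner_right assms(1)] assms(2) by auto

lemma cross_int:
  assumes "\<And>i. i \<le> N \<Longrightarrow> integrable \<mu> (\<lambda>\<omega>. n \<omega> i) \<and> integral\<^sup>L \<mu> (\<lambda>\<omega>. n \<omega> i) = 0"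
  shows "integrable \<mu> (\<lambda>\<omega>. cross A B K Q R P N x z v (n \<omega>))"
    "integral\<^sup>L \<mu> (\<lambda>\<omega>. cross A B K Q R P N x z v (n \<omega>)) = 0"
proof -
  define zs where "zs = zpred A B z v"
  define ds where "ds = epred A B K (x - z) (\<lambda>_. 0)"
  define c where "c = (\<lambda>i. ((zs i + ds i) v* Q + Q *v (zs i + ds i)) + ((K *v ds i + v i) v* R + R *v (K *v ds i + v i)) v* K)"
  define cN where "cN = (zs N + ds N) v* P + P *v (zs N + ds N)"
  have eq: "cross A B K Q R P N x z v (n \<omega>) = cN \<bullet> n \<omega> N + (\<Sum>i<N. c i \<bullet> n \<omega> i)" for \<omega>
    unfolding cross_def Let_def zs_def[symmetric] ds_def[symmetric] c_def cN_def
    by (simp only: bilin_lin2) (simp add: bilin_lin inner_add_left)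
  have t: "integrable \<mu> (\<lambda>\<omega>. d \<bullet> n \<omega> i) \<and> integral\<^sup>L \<mu> (\<lambda>\<omega>. d \<bullet> n \<omega> i) = 0" if "i \<le> N" for i d
    using inner_int0[of \<mu> "\<lambda>\<omega>. n \<omega> i" d] assms[OF that] by auto
  have i1: "integrable \<mu> (\<lambda>\<omega>. cN \<bullet> n \<omega> N + (\<Sum>i<N. c i \<bullet> n \<omega> i))"
    using t by (intro Bochner_Integration.integrable_add Bochner_Integration.integrable_sum) auto
  have i2: "integral\<^sup>L \<mu> (\<lambda>\<omega>. cN \<bullet> n \<omega> N + (\<Sum>i<N. c i \<bullet> n \<omega> i)) = 0"
    using t by (subst Bochner_Integration.integral_add) (auto intro!: Bochner_Integration.integrable_sum simp: Bochner_Integration.integral_sum)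
  show "integrable \<mu> (\<lambda>\<omega>. cross A B K Q R P N x z v (n \<omega>))" using i1 eq by simp
  show "integral\<^sup>L \<mu> (\<lambda>\<omega>. cross A B K Q R P N x z v (n \<omega>)) = 0" using i2 eq by simp
qed

lemma noise_integrable:
  assumes g: "\<And>i. i \<le> N \<Longrightarrow> good \<mu> (\<lambda>\<omega>. epred A B K (e \<omega>) (w \<omega>) i)"
  shows "integrable \<mu> (\<lambda>\<omega>. sample_cost A B K Q R P N (e \<omega>) 0 (\<lambda>_. 0) (w \<omega>))"
proof -
  have "integrable \<mu> (\<lambda>\<omega>. qf P (epred A B K (e \<omega>) (w \<omega>) N) +
     (\<Sum>i<N. qf Q (epred A B K (e \<omega>) (w \<omega>) i) + qf R (K *v epred A B K (e \<omega>) (w \<omega>) i)))"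
    using g by (intro Bochner_Integration.integrable_add Bochner_Integration.integrable_sum good_qf good_mv) auto
  then show ?thesis unfolding sample_cost_def Let_def by simp
qed

lemma exp_expand:
  assumes P: "prob_space \<mu>"
    and g: "\<And>i. i \<le> N \<Longrightarrow> good \<mu> (\<lambda>\<omega>. epred A B K (e \<omega>) (w \<omega>) i)"
    and m: "\<And>i. i \<le> N \<Longrightarrow> integral\<^sup>L \<mu> (\<lambda>\<omega>. epred A B K (e \<omega>) (w \<omega>) i) = 0"
  shows "integrable \<mu> (\<lambda>\<omega>. sample_cost A B K Q R P N (x + e \<omega>) z v (w \<omega>))"
    and "integral\<^sup>L \<mu> (\<lambda>\<omega>. sample_cost A B K Q R P N (x + e \<omega>) z v (w \<omega>))
         = sample_cost A B K Q R P N x z v (\<lambda>_. 0) + integral\<^sup>L \<mu> (\<lambda>\<omega>. sample_cost A B K Q R P N (e \<omega>) 0 (\<lambda>_. 0) (w \<omega>))"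
proof -
  interpret prob_space \<mu> by (rule P)
  have i1: "integrable \<mu> (\<lambda>\<omega>. sample_cost A B K Q R P N (e \<omega>) 0 (\<lambda>_. 0) (w \<omega>))"
    by (rule noise_integrable[OF g])
  have c: "integrable \<mu> (\<lambda>\<omega>. cross A B K Q R P N x z v (epred A B K (e \<omega>) (w \<omega>)))"
     "integral\<^sup>L \<mu> (\<lambda>\<omega>. cross A B K Q R P N x z v (epred A B K (e \<omega>) (w \<omega>))) = 0"
    using cross_int[of N \<mu> "\<lambda>\<omega>. epred A B K (e \<omega>) (w \<omega>)"] g m unfolding good_def by auto
  show "integrable \<mu> (\<lambda>\<omega>. sample_cost A B K Q R P N (x + e \<omega>) z v (w \<omega>))"
    unfolding expand using i1 c by (intro Bochner_Integration.integrable_add) auto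
  show "integral\<^sup>L \<mu> (\<lambda>\<omega>. sample_cost A B K Q R P N (x + e \<omega>) z v (w \<omega>))
         = sample_cost A B K Q R P N x z v (\<lambda>_. 0) + integral\<^sup>L \<mu> (\<lambda>\<omega>. sample_cost A B K Q R P N (e \<omega>) 0 (\<lambda>_. 0) (w \<omega>))"
    unfolding expand using i1 c
    by (simp add: Bochner_Integration.integral_add Bochner_Integration.integrable_add prob_space)
qed

lemma comp_good:
  fixes D :: "(real^'n) measure"
  assumes Dp: "prob_space D" and Ds: "sets D = sets borel"
    and i1: "integrable D (\<lambda>w. w)" and i2: "integrable D (\<lambda>w. (norm w)\<^sup>2)"
    and m0: "(\<integral>w. w \<partial>D) = 0" and j: "j \<le> N"
  shows "good (PiM {..N} (\<lambda>_. D)) (\<lambda>W. W j)" "integral\<^sup>L (PiM {..N} (\<lambda>_. D)) (\<lambda>W. W j) = 0"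
proof -
  let ?O = "PiM {..N} (\<lambda>_. D)"
  have jI: "j \<in> {..N}" using j by simp
  have mD: "(\<lambda>W. W j) \<in> measurable ?O D" by (rule measurable_component_singleton[OF jI, where M="\<lambda>_. D", simplified])
  have mB: "(\<lambda>W. W j) \<in> borel_measurable ?O" using mD[unfolded measurable_cong_sets[OF refl Ds]] .
  have ds: "distr ?O D (\<lambda>W. W j) = D" using distr_PiM_component[of "{..N}" "\<lambda>_. D" j] Dp jI by simp
  have bid: "(\<lambda>w::real^'n. w) \<in> borel_measurable D" by (simp add: measurable_cong_sets[OF Ds refl])
  have bn: "(\<lambda>w::real^'n. (norm w)\<^sup>2) \<in> borel_measurable D" by (simp add: measurable_cong_sets[OF Ds refl])
  have I1: "integrable ?O (\<lambda>W. W j)"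
    using integrable_distr_eq[OF mD bid] i1 ds by simp
  have I2: "integrable ?O (\<lambda>W. (norm (W j))\<^sup>2)"
    using integrable_distr_eq[OF mD bn] i2 ds by simp
  show "good ?O (\<lambda>W. W j)" unfolding good_def using mB I1 I2 by simp
  show "integral\<^sup>L ?O (\<lambda>W. W j) = 0"
    using integral_distr[OF mD bid] m0 ds by simp
qed

lemma noise_good:
  fixes D :: "(real^'n) measure"
  assumes Dp: "prob_space D" and Ds: "sets D = sets borel"
    and i1: "integrable D (\<lambda>w. w)" and i2: "integrable D (\<lambda>w. (norm w)\<^sup>2)"
    and m0: "(\<integral>w. w \<partial>D) = 0"
  shows "i \<le> N \<Longrightarrow> good (PiM {..N} (\<lambda>_. D)) (\<lambda>W. epred A B K 0 W i) \<and>
      integral\<^sup>L (PiM {..N} (\<lambda>_. D)) (\<lambda>W. epred A B K 0 W i) = 0"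
proof (induction i)
  case 0 then show ?case by (simp add: good_zero)
next
  case (Suc i)
  then have IH: "good (PiM {..N} (\<lambda>_. D)) (\<lambda>W. epred A B K 0 W i)"
     "integral\<^sup>L (PiM {..N} (\<lambda>_. D)) (\<lambda>W. epred A B K 0 W i) = 0" by auto
  note c = comp_good[OF assms, of i N]
  show ?case using good_lin[OF IH(1) c(1), of "A + B ** K"] IH(2) c Suc.prems by simp
qed

lemma det_good:
  fixes D :: "(real^'n) measure"
  assumes Dp: "prob_space D" and Ds: "sets D = sets borel"
    and i1: "integrable D (\<lambda>w. w)" and i2: "integrable D (\<lambda>w. (norm w)\<^sup>2)"
    and m0: "(\<integral>w. w \<partial>D) = 0"
  shows "good D (\<lambda>w. epred A B K w (\<lambda>_. 0) i) \<and> integral\<^sup>L D (\<lambda>w. epred A B K w (\<lambda>_. 0) i) = 0"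
proof (induction i)
  case 0
  have "(\<lambda>w::real^'n. w) \<in> borel_measurable D" by (simp add: measurable_cong_sets[OF Ds refl])
  then show ?case using i1 i2 m0 by (simp add: good_def)
next
  case (Suc i)
  then show ?case using good_lin[OF conjunct1[OF Suc] good_zero, of "A + B ** K"] by simp
qed

lemma exp_cost_decomp:
  fixes D :: "(real^'n) measure"
  assumes Dp: "prob_space D" and Ds: "sets D = sets borel"
    and i1: "integrable D (\<lambda>w. w)" and i2: "integrable D (\<lambda>w. (norm w)\<^sup>2)"
    and m0: "(\<integral>w. w \<partial>D) = 0"
  shows "exp_cost A B K Q R P D N x z v = sample_cost A B K Q R P N x z v (\<lambda>_. 0) + exp_cost A B K Q R P D N 0 0 (\<lambda>_. 0)"
proof -
  have P: "prob_space (PiM {..N} (\<lambda>_. D))" by (rule prob_space_PiM) (simp add: Dp)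
  note ng = noise_good[OF assms]
  have "integral\<^sup>L (PiM {..N} (\<lambda>_. D)) (\<lambda>W. sample_cost A B K Q R P N (x + 0) z v W)
     = sample_cost A B K Q R P N x z v (\<lambda>_. 0) + integral\<^sup>L (PiM {..N} (\<lambda>_. D)) (\<lambda>W. sample_cost A B K Q R P N 0 0 (\<lambda>_. 0) W)"
    by (rule exp_expand(2)[OF P, of N A B K "\<lambda>_. 0" "\<lambda>W. W" Q R P x z v]) (simp_all add: noise_good[OF assms])
  then show ?thesis unfolding exp_cost_def by simp
qed

lemma trace_int:
  fixes D :: "(real^'n) measure" and P Sigma :: "real^'n^'n"
  assumes Dp: "prob_space D" and Ds: "sets D = sets borel"
    and i2: "integrable D (\<lambda>w. (norm w)\<^sup>2)"
    and D_var: "\<forall>i j. Sigma $ i $ j = (\<integral>w. w $ i * w $ j \<partial>D)"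
  shows "(\<integral>w. qf P w \<partial>D) = trace (P ** Sigma)"
proof -
  have meas: "(\<lambda>w::real^'n. w $ i * w $ j) \<in> borel_measurable D" for i j
    by (simp add: measurable_cong_sets[OF Ds refl])
  have ii: "integrable D (\<lambda>w. w $ i * w $ j)" for i j
  proof (rule Bochner_Integration.integrable_bound[OF i2 meas])
    show "AE w in D. norm (w $ i * w $ j) \<le> norm ((norm w)\<^sup>2)"
    proof (rule AE_I2)
      fix w :: "real^'n"
      have "\<bar>w $ i\<bar> * \<bar>w $ j\<bar> \<le> norm w * norm w"
        by (intro mult_mono component_le_norm_cart) auto
      then show "norm (w $ i * w $ j) \<le> norm ((norm w)\<^sup>2)" by (simp add: abs_mult power2_eq_square)
    qed
  qed
  have q: "qf P w = (\<Sum>i\<in>UNIV. \<Sum>j\<in>UNIV. P $ i $ j * (w $ i * w $ j))" for w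
    unfolding qf_def inner_vec_def matrix_vector_mult_def
    by (simp add: sum_distrib_left mult_ac)
  have "(\<integral>w. qf P w \<partial>D) = (\<Sum>i\<in>UNIV. \<Sum>j\<in>UNIV. P $ i $ j * (\<integral>w. w $ i * w $ j \<partial>D))"
    unfolding q using ii
    by (simp add: Bochner_Integration.integral_sum Bochner_Integration.integrable_sum)
  also have "\<dots> = trace (P ** Sigma)"
    unfolding trace_def matrix_matrix_mult_def using D_var
    by (simp add: mult_ac)
  finally show ?thesis .
qed

lemma mv_tendsto: "(f \<longlongrightarrow> l) F \<Longrightarrow> ((\<lambda>x. (M::real^'n^'m) *v f x) \<longlongrightarrow> M *v l) F"
  by (rule bounded_linear.tendsto[OF matrix_vector_mul_bounded_linear])

lemma mv_cont[continuous_intros]: "continuous_on S f \<Longrightarrow> continuous_on S (\<lambda>x. (M::real^'n^'m) *v f x)"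
  by (rule bounded_linear.continuous_on[OF matrix_vector_mul_bounded_linear])

lemma qf_cont[continuous_intros]: "continuous_on S f \<Longrightarrow> continuous_on S (\<lambda>x. qf M (f x))"
  unfolding qf_def by (intro continuous_intros)

lemma P_psd:
  assumes lyap: "transpose (A + B ** K) ** P ** (A + B ** K) - P = - (Q + transpose K ** R ** K)"
    and stab: "\<forall>y. (\<lambda>j. (((*v) (A + B ** K)) ^^ j) y) \<longlonglongrightarrow> 0"
    and Qpsd: "\<forall>y. 0 \<le> qf Q y" and Rpsd: "\<forall>y. 0 \<le> qf R y"
  shows "0 \<le> qf P y"
proof -
  define AK where "AK = A + B ** K"
  have dec: "qf P (((*v) AK ^^ j) y) \<le> qf P y" for j
  proof (induction j)
    case 0 then show ?case by simp
  next
    case (Suc j)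
    have "qf P (((*v) AK ^^ Suc j) y) = qf P (AK *v (((*v) AK ^^ j) y))" by simp
    also have "\<dots> \<le> qf P (((*v) AK ^^ j) y)"
      using lyap_qf_gen[OF lyap[folded AK_def], of "((*v) AK ^^ j) y"] Qpsd Rpsd
      by (smt (verit))
    finally show ?case using Suc by simp
  qed
  have t: "(\<lambda>j. ((*v) AK ^^ j) y) \<longlonglongrightarrow> 0" using stab unfolding AK_def by blast
  have "(\<lambda>j. qf P (((*v) AK ^^ j) y)) \<longlonglongrightarrow> qf P 0"
    unfolding qf_def by (intro tendsto_intros mv_tendsto t)
  then have "qf P 0 \<le> qf P y" by (rule LIMSEQ_le_const2) (use dec in auto)
  then show ?thesis by simp
qed

lemma sample_nonneg:
  assumes "\<forall>y. 0 \<le> qf P y" "\<forall>y. 0 \<le> qf Q y" "\<forall>y. 0 \<le> qf R y"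
  shows "0 \<le> sample_cost A B K Q R P N x z v w"
  unfolding sample_cost_def Let_def using assms by (intro add_nonneg_nonneg sum_nonneg) auto

lemma epred_cont: "continuous_on UNIV (\<lambda>x. epred A B K (x - z) (\<lambda>_. 0) i)"
  by (induction i) (auto intro!: continuous_intros)

lemma sample_cont: "continuous_on UNIV (\<lambda>x. sample_cost A B K Q R P N x z v (\<lambda>_. 0))"
  unfolding sample_cost_def Let_def
  by (intro continuous_intros epred_cont continuous_on_compose2[OF epred_cont])

lemma inf_meas:
  fixes f :: "'a::topological_space \<Rightarrow> 'b \<Rightarrow> real"
  assumes ne: "F \<noteq> {}" and c: "\<And>v. v \<in> F \<Longrightarrow> continuous_on UNIV (\<lambda>x. f x v)"
    and bb: "\<And>x. bdd_below (f x ` F)"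
  shows "(\<lambda>x. Inf (f x ` F)) \<in> borel_measurable borel"
  unfolding borel_measurable_iff_less
proof
  fix a
  have h1: "{w \<in> space borel. Inf (f w ` F) < a} = (\<Union>v\<in>F. (\<lambda>x. f x v) -` {..<a})"
    using ne bb by (auto simp: cInf_less_iff)
  have h2: "open ((\<lambda>x. f x v) -` {..<a})" if "v \<in> F" for v
    using c[OF that] continuous_on_open_vimage[of UNIV "\<lambda>x. f x v"] by auto
  have "open (\<Union>v\<in>F. (\<lambda>x. f x v) -` {..<a})" using h2 by (intro open_UN) auto
  then show "{w \<in> space borel. Inf (f w ` F) < a} \<in> sets borel" unfolding h1 by (rule borel_open)
qed

lemma pdiff_anti: "T \<subseteq> T' \<Longrightarrow> pdiff S T' \<subseteq> pdiff S T"
  unfolding pdiff_def by auto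

lemma shift_feasible:
  assumes Rf_x: "(\<Union>j\<in>{..Nbar}. Rx j) \<subseteq> Rf"
    and Rf_u: "(\<Union>j\<in>{..Nbar}. Ru j) \<subseteq> (*v) K ` Rf"
    and Zf_X: "Zf \<subseteq> pdiff X Rf"
    and Zf_inv: "(*v) (A + B ** K) ` Zf \<subseteq> Zf"
    and Zf_U: "(*v) K ` Zf \<subseteq> pdiff U ((*v) K ` Rf)"
    and N: "N = Suc M" and horizon: "k + N \<le> Nbar"
    and vs_feas: "vs \<in> feasible A B X U Rx Ru Zf N k z"
    and v': "v' = (\<lambda>i. if i < M then vs (Suc i) else K *v zpred A B z vs N)"
  shows "v' \<in> feasible A B X U Rx Ru Zf N (Suc k) (A *v z + B *v vs 0)"
proof -
  define zz where "zz = zpred A B z vs"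
  have F: "\<And>i. i < N \<Longrightarrow> zz i \<in> pdiff X (Rx (i + k)) \<and> vs i \<in> pdiff U (Ru (i + k))" "zz N \<in> Zf"
    using vs_feas unfolding feasible_def zz_def by auto
  have zz': "zpred A B (A *v z + B *v vs 0) v' i = zz (Suc i)" if "i \<le> M" for i
    unfolding zz_def by (rule zpred_shift[OF that]) (simp add: v')
  have zzN: "zpred A B (A *v z + B *v vs 0) v' N = (A + B ** K) *v zz N"
  proof -
    have "zpred A B (A *v z + B *v vs 0) v' N = A *v zpred A B (A *v z + B *v vs 0) v' M + B *v v' M" by (simp add: N)
    also have "\<dots> = A *v zz N + B *v (K *v zz N)" using zz'[of M] by (simp add: v' N zz_def)
    also have "\<dots> = (A + B ** K) *v zz N" by (simp add: matrix_vector_mult_add_rdistrib matrix_vector_mul_assoc)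
    finally show ?thesis .
  qed
  have Nk: "N + k \<in> {..Nbar}" using horizon by simp
  have RxN: "Rx (N + k) \<subseteq> Rf" using Rf_x Nk by blast
  have RuN: "Ru (N + k) \<subseteq> (*v) K ` Rf" using Rf_u Nk by blast
  have part1: "zpred A B (A *v z + B *v vs 0) v' i \<in> pdiff X (Rx (i + Suc k)) \<and> v' i \<in> pdiff U (Ru (i + Suc k))"
    if "i < N" for i
  proof (cases "i < M")
    case True
    then show ?thesis using zz'[of i] F(1)[of "Suc i"] N by (simp add: v')
  next
    case False
    then have i: "i = M" using that N by simp
    have "zz N \<in> pdiff X (Rx (N + k))" using F(2) Zf_X pdiff_anti[OF RxN] by blast
    moreover have "K *v zz N \<in> pdiff U (Ru (N + k))" using F(2) Zf_U pdiff_anti[OF RuN] by blast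
    ultimately show ?thesis using zz'[of M] i N by (simp add: v' zz_def)
  qed
  have part2: "zpred A B (A *v z + B *v vs 0) v' N \<in> Zf" using zzN F(2) Zf_inv by blast
  show ?thesis unfolding feasible_def using part1 part2 by blast
qed

theorem theorem3:
  fixes A :: "real^'n^'n" and B :: "real^'m^'n" and K :: "real^'n^'m"
    and Q :: "real^'n^'n" and R :: "real^'m^'m" and P :: "real^'n^'n"
    and Sigma :: "real^'n^'n" and D :: "(real^'n) measure"
    and X :: "(real^'n) set" and U :: "(real^'m) set"
    and Rx :: "nat \<Rightarrow> (real^'n) set" and Ru :: "nat \<Rightarrow> (real^'m) set"
    and Rf :: "(real^'n) set" and Zf :: "(real^'n) set"
    and N Nbar k :: nat and x z :: "real^'n" and vs :: "nat \<Rightarrow> real^'m"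
  assumes convX: "convex X" and convU: "convex U"
    and stab: "\<forall>y. (\<lambda>j. (((*v) (A + B ** K)) ^^ j) y) \<longlonglongrightarrow> 0"
    and Qsym: "transpose Q = Q" and Qpsd: "\<forall>y. 0 \<le> qf Q y"
    and Rsym: "transpose R = R" and Rpd: "\<forall>y. y \<noteq> 0 \<longrightarrow> 0 < qf R y"
    and lyap: "transpose (A + B ** K) ** P ** (A + B ** K) - P = - (Q + transpose K ** R ** K)"
    and Rf_x: "(\<Union>j\<in>{..Nbar}. Rx j) \<subseteq> Rf"
    and Rf_u: "(\<Union>j\<in>{..Nbar}. Ru j) \<subseteq> (*v) K ` Rf"
    and Zf_X: "Zf \<subseteq> pdiff X Rf"
    and Zf_inv: "(*v) (A + B ** K) ` Zf \<subseteq> Zf"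
    and Zf_U: "(*v) K ` Zf \<subseteq> pdiff U ((*v) K ` Rf)"
    and D_prob: "prob_space D" and D_sets: "sets D = sets borel"
    and D_int1: "integrable D (\<lambda>w. w)" and D_int2: "integrable D (\<lambda>w. (norm w)\<^sup>2)"
    and D_mean: "(\<integral>w. w \<partial>D) = 0"
    and D_var: "\<forall>i j. Sigma $ i $ j = (\<integral>w. w $ i * w $ j \<partial>D)"
    and N_pos: "0 < N" and horizon: "k + N \<le> Nbar"
    and vs_feas: "vs \<in> feasible A B X U Rx Ru Zf N k z"
    and vs_opt: "\<forall>v \<in> feasible A B X U Rx Ru Zf N k z.
                   exp_cost A B K Q R P D N x z vs \<le> exp_cost A B K Q R P D N x z v"
  shows "(let u = K *v (x - z) + vs 0; z' = A *v z + B *v vs 0 in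
          (\<integral>w. Jstar A B K Q R P D X U Rx Ru Zf N (Suc k) (A *v x + B *v u + w) z'
                - Jstar A B K Q R P D X U Rx Ru Zf N k x z \<partial>D)
          \<le> - qf Q x - qf R u + trace (P ** Sigma))"
proof -
  obtain M where N: "N = Suc M" using N_pos by (cases N) auto
  define u where "u = K *v (x - z) + vs 0"
  define z1 where "z1 = A *v z + B *v vs 0"
  define xb where "xb = A *v x + B *v u"
  define v' where "v' = (\<lambda>i. if i < M then vs (Suc i) else K *v zpred A B z vs N)"
  define C where "C = exp_cost A B K Q R P D N 0 0 (\<lambda>_. 0)"
  define F0 where "F0 = feasible A B X U Rx Ru Zf N k z"
  define F1 where "F1 = feasible A B X U Rx Ru Zf N (Suc k) z1"
  have Rpsd: "\<forall>y. 0 \<le> qf R y"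
  proof
    fix y show "0 \<le> qf R y" using Rpd by (cases "y = 0") (auto simp: less_imp_le)
  qed
  have Ppsd: "\<forall>y. 0 \<le> qf P y" using P_psd[OF lyap stab Qpsd Rpsd] by blast
  have dec: "exp_cost A B K Q R P D N y zz v = sample_cost A B K Q R P N y zz v (\<lambda>_. 0) + C" for y zz v
    unfolding C_def by (rule exp_cost_decomp[OF D_prob D_sets D_int1 D_int2 D_mean])
  have geC: "C \<le> exp_cost A B K Q R P D N y zz v" for y zz v
    using dec[of y zz v] sample_nonneg[OF Ppsd Qpsd Rpsd, of A B K N y zz v "\<lambda>_. 0"] by simp
  have J0: "Jstar A B K Q R P D X U Rx Ru Zf N k x z = sample_cost A B K Q R P N x z vs (\<lambda>_. 0) + C"
  proof -
    have "Jstar A B K Q R P D X U Rx Ru Zf N k x z = exp_cost A B K Q R P D N x z vs"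
      unfolding Jstar_def using vs_feas vs_opt by (intro cInf_eq_minimum) auto
    then show ?thesis using dec by simp
  qed
  have v'F: "v' \<in> F1"
    unfolding F1_def z1_def
    by (rule shift_feasible[OF Rf_x Rf_u Zf_X Zf_inv Zf_U N horizon vs_feas]) (simp add: v'_def)
  have bb: "bdd_below (exp_cost A B K Q R P D N y z1 ` F1)" for y
    using geC by (intro bdd_belowI2[where m=C]) auto
  define J1 where "J1 = (\<lambda>y. Jstar A B K Q R P D X U Rx Ru Zf N (Suc k) y z1)"
  have J1_le: "J1 y \<le> sample_cost A B K Q R P N y z1 v' (\<lambda>_. 0) + C" for y
  proof -
    have "J1 y \<le> exp_cost A B K Q R P D N y z1 v'"
      unfolding J1_def Jstar_def F1_def[symmetric] using v'F bb by (intro cInf_lower) auto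
    then show ?thesis using dec by simp
  qed
  have J1_ge: "C \<le> J1 y" for y
    unfolding J1_def Jstar_def F1_def[symmetric] using v'F geC by (intro cInf_greatest) auto
  have J1_meas: "J1 \<in> borel_measurable borel"
  proof -
    have "(\<lambda>y. Inf ((\<lambda>v. exp_cost A B K Q R P D N y z1 v) ` F1)) \<in> borel_measurable borel"
    proof (rule inf_meas)
      show "F1 \<noteq> {}" using v'F by auto
      fix v show "continuous_on UNIV (\<lambda>y. exp_cost A B K Q R P D N y z1 v)"
        unfolding dec by (intro continuous_intros sample_cont)
    next
      fix y show "bdd_below ((\<lambda>v. exp_cost A B K Q R P D N y z1 v) ` F1)" by (rule bb)
    qed
    then show ?thesis unfolding J1_def Jstar_def F1_def by simp
  qed
  have J1D: "(\<lambda>w. J1 (xb + w)) \<in> borel_measurable D"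
  proof -
    have "(\<lambda>w. J1 (xb + w)) \<in> borel_measurable borel"
      using measurable_compose[OF _ J1_meas, of "\<lambda>w. xb + w" borel] by simp
    then show ?thesis by (simp add: measurable_cong_sets[OF D_sets refl])
  qed
  interpret Dp: prob_space D by (rule D_prob)
  have dg: "good D (\<lambda>w. epred A B K w (\<lambda>_. 0) i)" "integral\<^sup>L D (\<lambda>w. epred A B K w (\<lambda>_. 0) i) = 0" for i
    using det_good[OF D_prob D_sets D_int1 D_int2 D_mean, of A B K i] by auto
  have ih: "integrable D (\<lambda>w. sample_cost A B K Q R P N (xb + w) z1 v' (\<lambda>_. 0))"
    by (rule exp_expand(1)[OF D_prob, of N A B K "\<lambda>w. w" "\<lambda>_ _. 0"]) (simp_all add: dg)
  have eh: "integral\<^sup>L D (\<lambda>w. sample_cost A B K Q R P N (xb + w) z1 v' (\<lambda>_. 0))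
      = sample_cost A B K Q R P N xb z1 v' (\<lambda>_. 0) + integral\<^sup>L D (\<lambda>w. sample_cost A B K Q R P N w 0 (\<lambda>_. 0) (\<lambda>_. 0))"
    by (rule exp_expand(2)[OF D_prob, of N A B K "\<lambda>w. w" "\<lambda>_ _. 0"]) (simp_all add: dg)
  have tel: "integral\<^sup>L D (\<lambda>w. sample_cost A B K Q R P N w 0 (\<lambda>_. 0) (\<lambda>_. 0)) = trace (P ** Sigma)"
    using telescope[OF lyap] trace_int[OF D_prob D_sets D_int2 D_var] by simp
  have sh: "sample_cost A B K Q R P N xb z1 v' (\<lambda>_. 0) = sample_cost A B K Q R P N x z vs (\<lambda>_. 0) - qf Q x - qf R u"
    unfolding xb_def z1_def u_def by (rule shift_cost[OF lyap N]) (simp add: v'_def)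
  have iJ: "integrable D (\<lambda>w. J1 (xb + w) - C)"
  proof (rule Bochner_Integration.integrable_bound[OF ih])
    show "(\<lambda>w. J1 (xb + w) - C) \<in> borel_measurable D" using J1D by measurable
    show "AE w in D. norm (J1 (xb + w) - C) \<le> norm (sample_cost A B K Q R P N (xb + w) z1 v' (\<lambda>_. 0))"
      using J1_le J1_ge by (intro AE_I2) (smt (verit) real_norm_def)
  qed
  have iJ2: "integrable D (\<lambda>w. J1 (xb + w) - Jstar A B K Q R P D X U Rx Ru Zf N k x z)"
  proof -
    have "integrable D (\<lambda>w. (J1 (xb + w) - C) + (C - Jstar A B K Q R P D X U Rx Ru Zf N k x z))"
      using iJ by (intro Bochner_Integration.integrable_add) auto
    then show ?thesis by simp
  qed
  have ib: "integrable D (\<lambda>w. sample_cost A B K Q R P N (xb + w) z1 v' (\<lambda>_. 0) + C - Jstar A B K Q R P D X U Rx Ru Zf N k x z)"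
    using ih by (intro Bochner_Integration.integrable_diff Bochner_Integration.integrable_add) auto
  have "(\<integral>w. J1 (xb + w) - Jstar A B K Q R P D X U Rx Ru Zf N k x z \<partial>D)
     \<le> (\<integral>w. sample_cost A B K Q R P N (xb + w) z1 v' (\<lambda>_. 0) + C - Jstar A B K Q R P D X U Rx Ru Zf N k x z \<partial>D)"
    using iJ2 ib J1_le by (intro Bochner_Integration.integral_mono) auto
  also have "\<dots> = integral\<^sup>L D (\<lambda>w. sample_cost A B K Q R P N (xb + w) z1 v' (\<lambda>_. 0)) + C - Jstar A B K Q R P D X U Rx Ru Zf N k x z"
    using ih by (simp add: Bochner_Integration.integral_diff Bochner_Integration.integral_add Dp.prob_space)
  also have "\<dots> = - qf Q x - qf R u + trace (P ** Sigma)"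
    unfolding eh tel sh J0 by simp
  finally show ?thesis unfolding Let_def u_def[symmetric] z1_def[symmetric] xb_def[symmetric] J1_def by simp
qed

end
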